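(* Let $t=0$, $n\ge3$ and $1<\ell<n$. Consider the mTAZRP of type $\lambda$ on $n$ sites with parameters $x_1,\dots,x_n>0$, started at time $0$ from any configuration in which sites $\ell+1,\dots,n$ are empty. Then the law of the path $(W_s|_{[\ell]})_{s>0}$, where $W_s|_{[\ell]}=(W_s(1),\dots,W_s(\ell))$ is the configuration restricted to sites $1,\dots,\ell$, is unchanged when the parameters $x_{\ell+1},\dots,x_n$ are permuted (keeping $x_1,\dots,x_\ell$ fixed).
   Context: mTAZRP at $t=0$: for a partition $\lambda$, sites $1,\dots,n$ on a ring (site $n+1$ is site $1$); a configuration assigns to each site a multiset of species so that the union is the multiset of parts of $\lambda$ (larger label = stronger). With $t=0$, each nonempty site $j$, independently, at rate $x_j^{-1}$ sends one particle of the largest species present at $j$ to site $j+1$; empty sites do nothing. *)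

theory Defs
  imports Complex_Main "HOL-Library.Multiset" "HOL-Combinatorics.Permutations"
begin

text \<open>mTAZRP at t = 0 on a ring of n sites 1..n. A configuration is a map
 eta :: nat => nat multiset (site |-> multiset of species), empty off {1..n},
 whose union over the sites is the multiset lam of parts of the partition.\<close>

definition nxt :: "nat \<Rightarrow> nat \<Rightarrow> nat" where
  "nxt n j = (if j = n then 1 else j + 1)"

definition Conf :: "nat \<Rightarrow> nat multiset \<Rightarrow> (nat \<Rightarrow> nat multiset) set" where
  "Conf n lam = {eta. (\<forall>j. j \<notin> {1..n} \<longrightarrow> eta j = {#}) \<and> (\<Sum>j\<in>{1..n}. eta j) = lam}"

definition step :: "nat \<Rightarrow> (nat \<Rightarrow> nat multiset) \<Rightarrow> nat \<Rightarrow> (nat \<Rightarrow> nat multiset)" where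
  "step n eta j = (let m = Max_mset (eta j); eta1 = eta(j := eta j - {#m#})
                   in eta1(nxt n j := eta1 (nxt n j) + {#m#}))"

definition rate :: "nat \<Rightarrow> (nat \<Rightarrow> real) \<Rightarrow> (nat \<Rightarrow> nat multiset) \<Rightarrow> (nat \<Rightarrow> nat multiset) \<Rightarrow> real" where
  "rate n x eta eta' = (\<Sum>j\<in>{1..n}. if eta j \<noteq> {#} \<and> step n eta j = eta' then 1 / x j else 0)"

definition gen :: "nat \<Rightarrow> nat multiset \<Rightarrow> (nat \<Rightarrow> real) \<Rightarrow> (nat \<Rightarrow> nat multiset) \<Rightarrow> (nat \<Rightarrow> nat multiset) \<Rightarrow> real" where
  "gen n lam x a b = (if a = b then - (\<Sum>c\<in>Conf n lam - {a}. rate n x a c) else rate n x a b)"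

fun matpow :: "'s set \<Rightarrow> ('s \<Rightarrow> 's \<Rightarrow> real) \<Rightarrow> nat \<Rightarrow> 's \<Rightarrow> 's \<Rightarrow> real" where
  "matpow S Q 0 a b = (if a = b then 1 else 0)"
| "matpow S Q (Suc k) a b = (\<Sum>c\<in>S. Q a c * matpow S Q k c b)"

definition transp :: "'s set \<Rightarrow> ('s \<Rightarrow> 's \<Rightarrow> real) \<Rightarrow> real \<Rightarrow> 's \<Rightarrow> 's \<Rightarrow> real" where
  "transp S Q t a b = (\<Sum>k. t ^ k / fact k * matpow S Q k a b)"

definition restr :: "nat \<Rightarrow> (nat \<Rightarrow> nat multiset) \<Rightarrow> nat multiset list" where
  "restr l eta = map eta [1..<l+1]"

text \<open>Finite-dimensional distributions of the restricted process:
 fdd S Q l a s [(t1,c1),...,(tk,ck)] = P(W_{t_i}|[l] = c_i for all i | W_s = a).\<close>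
fun fdd :: "(nat \<Rightarrow> nat multiset) set \<Rightarrow> ((nat \<Rightarrow> nat multiset) \<Rightarrow> (nat \<Rightarrow> nat multiset) \<Rightarrow> real)
            \<Rightarrow> nat \<Rightarrow> (nat \<Rightarrow> nat multiset) \<Rightarrow> real \<Rightarrow> (real \<times> nat multiset list) list \<Rightarrow> real" where
  "fdd S Q l a s [] = 1"
| "fdd S Q l a s ((t, c) # rest) =
     (\<Sum>b\<in>{b\<in>S. restr l b = c}. transp S Q (t - s) a b * fdd S Q l b t rest)"

end

theory Submission
  imports Defs
begin

definition opm :: "'s set \<Rightarrow> ('s \<Rightarrow> 's \<Rightarrow> real) \<Rightarrow> ('s \<Rightarrow> real) \<Rightarrow> 's \<Rightarrow> real" where
  "opm S M f a = (\<Sum>c\<in>S. M a c * f c)"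

lemma opm_cong: "(\<And>c. c \<in> S \<Longrightarrow> f c = g c) \<Longrightarrow> opm S M f a = opm S M g a"
  unfolding opm_def by (auto intro: sum.cong)

lemma matpow_opm:
  assumes "finite S" "a \<in> S"
  shows "(\<Sum>b\<in>S. matpow S Q k a b * h b) = (opm S Q ^^ k) h a"
  using assms(2)
proof (induction k arbitrary: a)
  case 0
  have "(\<Sum>b\<in>S. matpow S Q 0 a b * h b) = (\<Sum>b\<in>S. if a = b then h b else 0)"
    by (intro sum.cong) auto
  then show ?case using assms 0 by (simp add: sum.delta)
next
  case (Suc k)
  have "(\<Sum>b\<in>S. matpow S Q (Suc k) a b * h b) = (\<Sum>b\<in>S. \<Sum>c\<in>S. Q a c * matpow S Q k c b * h b)"
    by (simp add: sum_distrib_right mult.assoc)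
  also have "\<dots> = (\<Sum>c\<in>S. Q a c * (\<Sum>b\<in>S. matpow S Q k c b * h b))"
    by (subst sum.swap) (simp add: sum_distrib_left mult.assoc)
  also have "\<dots> = (\<Sum>c\<in>S. Q a c * (opm S Q ^^ k) h c)"
    by (intro sum.cong refl) (simp add: Suc.IH)
  also have "\<dots> = opm S Q ((opm S Q ^^ k) h) a"
    by (rule opm_def[symmetric])
  finally show ?case by simp
qed

lemma matpow_bound:
  assumes "finite S" "a \<in> S" "\<forall>u\<in>S. \<forall>v\<in>S. \<bar>Q u v\<bar> \<le> B" "B \<ge> 0"
  shows "\<bar>matpow S Q k a b\<bar> \<le> (real (card S) * B) ^ k"
  using assms(2)
proof (induction k arbitrary: a)
  case 0
  then show ?case by simp
next
  case (Suc k)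
  have "\<bar>matpow S Q (Suc k) a b\<bar> \<le> (\<Sum>c\<in>S. \<bar>Q a c * matpow S Q k c b\<bar>)"
    by (simp add: sum_abs)
  also have "\<dots> \<le> (\<Sum>c\<in>S. B * (real (card S) * B) ^ k)"
  proof (rule sum_mono)
    fix c assume c: "c \<in> S"
    have "\<bar>Q a c\<bar> \<le> B" using assms(3) Suc.prems c by blast
    moreover have "\<bar>matpow S Q k c b\<bar> \<le> (real (card S) * B) ^ k" using Suc.IH c by blast
    ultimately show "\<bar>Q a c * matpow S Q k c b\<bar> \<le> B * (real (card S) * B) ^ k"
      by (simp add: abs_mult mult_mono)
  qed
  also have "\<dots> = (real (card S) * B) ^ Suc k" by (simp add: algebra_simps)
  finally show ?case .
qed

lemma matpow_summable:
  assumes "finite S" "a \<in> S"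
  shows "summable (\<lambda>k. t ^ k / fact k * matpow S Q k a b)"
proof -
  define B where "B = (\<Sum>u\<in>S. \<Sum>v\<in>S. \<bar>Q u v\<bar>)"
  have B0: "B \<ge> 0" unfolding B_def by (simp add: sum_nonneg)
  have BQ: "\<forall>u\<in>S. \<forall>v\<in>S. \<bar>Q u v\<bar> \<le> B"
  proof (intro ballI)
    fix u v assume u: "u \<in> S" and v: "v \<in> S"
    have "\<bar>Q u v\<bar> \<le> (\<Sum>v\<in>S. \<bar>Q u v\<bar>)"
      using member_le_sum[of v S "\<lambda>v. \<bar>Q u v\<bar>"] v assms(1) by simp
    also have "\<dots> \<le> B" unfolding B_def
      using member_le_sum[of u S "\<lambda>u. \<Sum>v\<in>S. \<bar>Q u v\<bar>"] u assms(1) by (simp add: sum_nonneg)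
    finally show "\<bar>Q u v\<bar> \<le> B" .
  qed
  define C where "C = real (card S) * B"
  have "summable (\<lambda>k. inverse (fact k) * (\<bar>t\<bar> * C) ^ k)" by (rule summable_exp)
  moreover have "norm (t ^ k / fact k * matpow S Q k a b) \<le> inverse (fact k) * (\<bar>t\<bar> * C) ^ k" for k
  proof -
    have "\<bar>matpow S Q k a b\<bar> \<le> C ^ k" unfolding C_def using matpow_bound[OF assms BQ B0] .
    then have "\<bar>t\<bar> ^ k * \<bar>matpow S Q k a b\<bar> \<le> \<bar>t\<bar> ^ k * C ^ k"
      by (simp add: mult_left_mono)
    have "norm (t ^ k / fact k * matpow S Q k a b) = inverse (fact k) * (\<bar>t\<bar> ^ k * \<bar>matpow S Q k a b\<bar>)"
      by (simp add: abs_mult power_abs divide_inverse)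
    also have "\<dots> \<le> inverse (fact k) * (\<bar>t\<bar> ^ k * C ^ k)"
      by (rule mult_left_mono) (use \<open>\<bar>t\<bar> ^ k * \<bar>matpow S Q k a b\<bar> \<le> \<bar>t\<bar> ^ k * C ^ k\<close> in auto)
    also have "\<dots> = inverse (fact k) * (\<bar>t\<bar> * C) ^ k"
      by (simp add: power_mult_distrib)
    finally show ?thesis .
  qed
  ultimately show ?thesis by (rule summable_comparison_test'[where N=0]) 
qed

lemma opm_pow_summable:
  assumes "finite S" "a \<in> S"
  shows "summable (\<lambda>k. t ^ k / fact k * (opm S Q ^^ k) h a)"
proof -
  have "summable (\<lambda>k. \<Sum>b\<in>S. t ^ k / fact k * matpow S Q k a b * h b)"
    by (intro summable_sum summable_mult2 matpow_summable assms)
  then show ?thesis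
    by (simp add: matpow_opm[OF assms, symmetric] sum_distrib_left mult.assoc)
qed

lemma transp_opm:
  assumes "finite S" "a \<in> S"
  shows "(\<Sum>b\<in>S. transp S Q t a b * h b) = (\<Sum>k. t ^ k / fact k * (opm S Q ^^ k) h a)"
proof -
  have "(\<Sum>b\<in>S. transp S Q t a b * h b) = (\<Sum>b\<in>S. \<Sum>k. t ^ k / fact k * matpow S Q k a b * h b)"
    unfolding transp_def
    by (intro sum.cong refl suminf_mult2 matpow_summable assms)
  also have "\<dots> = (\<Sum>k. \<Sum>b\<in>S. t ^ k / fact k * matpow S Q k a b * h b)"
    by (intro suminf_sum[symmetric] summable_mult2 matpow_summable assms)
  also have "\<dots> = (\<Sum>k. t ^ k / fact k * (opm S Q ^^ k) h a)"
    by (simp add: matpow_opm[OF assms, symmetric] sum_distrib_left mult.assoc)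
  finally show ?thesis .
qed

locale intertw =
  fixes S :: "'s set" and Q Q' K :: "'s \<Rightarrow> 's \<Rightarrow> real"
  assumes fin: "finite S"
    and comm: "\<And>f a. a \<in> S \<Longrightarrow> opm S Q' (opm S K f) a = opm S K (opm S Q f) a"
begin

lemma pow_comm: "a \<in> S \<Longrightarrow> (opm S Q' ^^ k) (opm S K f) a = opm S K ((opm S Q ^^ k) f) a"
proof (induction k arbitrary: a)
  case 0 then show ?case by simp
next
  case (Suc k)
  have "(opm S Q' ^^ Suc k) (opm S K f) a = opm S Q' ((opm S Q' ^^ k) (opm S K f)) a" by simp
  also have "\<dots> = opm S Q' (opm S K ((opm S Q ^^ k) f)) a"
    by (rule opm_cong) (use Suc.IH in auto)
  also have "\<dots> = opm S K (opm S Q ((opm S Q ^^ k) f)) a" using comm Suc.prems by blast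
  finally show ?case by simp
qed

lemma transp_comm:
  assumes "a \<in> S"
  shows "(\<Sum>b\<in>S. transp S Q' t a b * opm S K h b) = opm S K (\<lambda>d. \<Sum>b\<in>S. transp S Q t d b * h b) a"
proof -
  have "(\<Sum>b\<in>S. transp S Q' t a b * opm S K h b) = (\<Sum>k. t ^ k / fact k * (opm S Q' ^^ k) (opm S K h) a)"
    by (rule transp_opm[OF fin assms])
  also have "\<dots> = (\<Sum>k. t ^ k / fact k * opm S K ((opm S Q ^^ k) h) a)"
    using pow_comm[OF assms] by simp
  also have "\<dots> = (\<Sum>k. \<Sum>d\<in>S. K a d * (t ^ k / fact k * (opm S Q ^^ k) h d))"
    by (simp add: opm_def sum_distrib_left mult.assoc mult.left_commute)
  also have "\<dots> = (\<Sum>d\<in>S. \<Sum>k. K a d * (t ^ k / fact k * (opm S Q ^^ k) h d))"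
    by (intro suminf_sum summable_mult opm_pow_summable fin) auto
  also have "\<dots> = (\<Sum>d\<in>S. K a d * (\<Sum>k. t ^ k / fact k * (opm S Q ^^ k) h d))"
    by (intro sum.cong refl suminf_mult opm_pow_summable fin)
  also have "\<dots> = opm S K (\<lambda>d. \<Sum>b\<in>S. transp S Q t d b * h b) a"
    unfolding opm_def[of S K] by (intro sum.cong refl) (simp add: transp_opm[OF fin])
  finally show ?thesis .
qed

end

lemma fdd_comm:
  fixes S :: "(nat \<Rightarrow> nat multiset) set"
  assumes I: "intertw S Q Q' K"
  assumes R: "\<And>a d. a \<in> S \<Longrightarrow> d \<in> S \<Longrightarrow> K a d \<noteq> 0 \<Longrightarrow> restr l d = restr l a"
    and One: "\<And>a. a \<in> S \<Longrightarrow> (\<Sum>d\<in>S. K a d) = 1"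
  shows "a \<in> S \<Longrightarrow> fdd S Q' l a s obs = opm S K (\<lambda>d. fdd S Q l d s obs) a"
  using R
proof (induction obs arbitrary: a s)
  case Nil
  then show ?case using One by (simp add: opm_def)
next
  case (Cons o' rest)
  obtain t c where o': "o' = (t, c)" by (cases o')
  define h where "h d = (if restr l d = c then fdd S Q l d t rest else 0)" for d
  have "fdd S Q' l a s ((t, c) # rest) = (\<Sum>b\<in>S. transp S Q' (t - s) a b * (if restr l b = c then fdd S Q' l b t rest else 0))"
    by (simp add: sum.inter_filter[OF intertw.fin[OF I], symmetric] if_distrib cong: if_cong)
  also have "\<dots> = (\<Sum>b\<in>S. transp S Q' (t - s) a b * opm S K h b)"
  proof (intro sum.cong refl)
    fix b assume b: "b \<in> S"
    have "(if restr l b = c then fdd S Q' l b t rest else 0) = opm S K h b"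
    proof (cases "restr l b = c")
      case True
      have "fdd S Q' l b t rest = opm S K (\<lambda>d. fdd S Q l d t rest) b"
        using Cons.IH[OF b] Cons.prems by blast
      also have "\<dots> = opm S K h b" unfolding opm_def
      proof (intro sum.cong refl)
        fix d assume d: "d \<in> S"
        show "K b d * fdd S Q l d t rest = K b d * h d"
        proof (cases "K b d = 0")
          case False
          then have "restr l d = restr l b" using R[OF b d] by blast
          then show ?thesis using True by (simp add: h_def)
        qed simp
      qed
      finally show ?thesis using True by simp
    next
      case False
      have "opm S K h b = 0" unfolding opm_def
      proof (intro sum.neutral ballI)
        fix d assume d: "d \<in> S"
        show "K b d * h d = 0"
        proof (cases "K b d = 0")
          case False
          then have "restr l d = restr l b" using R[OF b d] by blast
          then show ?thesis using \<open>restr l b \<noteq> c\<close> by (simp add: h_def)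
        qed simp
      qed
      then show ?thesis using False by simp
    qed
    then show "transp S Q' (t - s) a b * (if restr l b = c then fdd S Q' l b t rest else 0) =
          transp S Q' (t - s) a b * opm S K h b" by simp
  qed
  also have "\<dots> = opm S K (\<lambda>d. \<Sum>b\<in>S. transp S Q (t - s) d b * h b) a"
    by (rule intertw.transp_comm[OF I Cons.prems(1)])
  also have "\<dots> = opm S K (\<lambda>d. fdd S Q l d s ((t, c) # rest)) a"
    unfolding h_def
    by (rule opm_cong) (simp add: sum.inter_filter[OF intertw.fin[OF I], symmetric] if_distrib cong: if_cong)
  finally show ?case using o' by simp
qed

definition rr :: "(nat \<Rightarrow> real) \<Rightarrow> (nat \<Rightarrow> nat multiset) \<Rightarrow> nat \<Rightarrow> real" where
  "rr x a j = (if a j \<noteq> {#} then 1 / x j else 0)"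

definition Qop :: "nat \<Rightarrow> (nat \<Rightarrow> real) \<Rightarrow> ((nat \<Rightarrow> nat multiset) \<Rightarrow> real) \<Rightarrow> (nat \<Rightarrow> nat multiset) \<Rightarrow> real" where
  "Qop n x f a = (\<Sum>j\<in>{1..n}. rr x a j * (f (step n a j) - f a))"

lemma nxt_in: "j \<in> {1..n} \<Longrightarrow> nxt n j \<in> {1..n}"
  by (auto simp: nxt_def)

lemma nxt_ne: "n \<ge> 2 \<Longrightarrow> j \<in> {1..n} \<Longrightarrow> nxt n j \<noteq> j"
  by (auto simp: nxt_def)

lemma step_apply:
  assumes "nxt n j \<noteq> j"
  shows "step n a j i = (if i = j then a j - {#Max_mset (a j)#}
            else if i = nxt n j then a i + {#Max_mset (a j)#} else a i)"
  using assms by (auto simp: step_def Let_def)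

lemma sum_upd_mset:
  fixes g :: "nat \<Rightarrow> nat multiset"
  assumes "finite I" "j \<in> I"
  shows "sum (g(j := v)) I + g j = sum g I + v"
proof -
  have "sum (g(j := v)) I = v + sum (g(j := v)) (I - {j})" using assms by (simp add: sum.remove)
  also have "sum (g(j := v)) (I - {j}) = sum g (I - {j})" by (intro sum.cong) auto
  finally have 1: "sum (g(j := v)) I = v + sum g (I - {j})" .
  have 2: "sum g I = g j + sum g (I - {j})" using assms by (simp add: sum.remove)
  show ?thesis using 1 2 by (simp add: algebra_simps)
qed

lemma step_Conf:
  assumes a: "a \<in> Conf n lam" and j: "j \<in> {1..n}" and ne: "a j \<noteq> {#}" and n: "n \<ge> 2"
  shows "step n a j \<in> Conf n lam"
proof -
  define m where "m = Max_mset (a j)"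
  define a1 where "a1 = a(j := a j - {#m#})"
  define q where "q = nxt n j"
  have q: "q \<in> {1..n}" "q \<noteq> j" using nxt_in[OF j] nxt_ne[OF n j] by (auto simp: q_def)
  have st: "step n a j = a1(q := a1 q + {#m#})" by (simp add: step_def Let_def m_def a1_def q_def)
  have mj: "m \<in># a j" using ne by (simp add: m_def)
  have s1: "sum a1 {1..n} + a j = sum a {1..n} + (a j - {#m#})"
    unfolding a1_def by (rule sum_upd_mset) (use j in auto)
  have s1': "sum a1 {1..n} + {#m#} = sum a {1..n}"
  proof -
    have "sum a1 {1..n} + {#m#} + (a j - {#m#}) = sum a {1..n} + (a j - {#m#})"
      using s1 mj by (metis add.assoc add.commute insert_DiffM2)
    then show ?thesis by simp
  qed
  have s2: "sum (a1(q := a1 q + {#m#})) {1..n} + a1 q = sum a1 {1..n} + (a1 q + {#m#})"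
    by (rule sum_upd_mset) (use q in auto)
  have "sum (step n a j) {1..n} = sum a {1..n}"
    using s2 s1' unfolding st by (metis add.assoc add.commute add_right_cancel)
  moreover have "\<forall>i. i \<notin> {1..n} \<longrightarrow> step n a j i = {#}"
    using a j q unfolding st a1_def Conf_def by auto
  ultimately show ?thesis using a unfolding Conf_def by simp
qed

lemma step_ne:
  assumes "a j \<noteq> {#}" "nxt n j \<noteq> j"
  shows "step n a j \<noteq> a"
proof
  assume "step n a j = a"
  then have "step n a j j = a j" by simp
  moreover have "Max_mset (a j) \<in># a j" using assms by simp
  ultimately have m: "Max_mset (a j) \<in># a j" "a j - {#Max_mset (a j)#} = a j"
    using assms(2) by (auto simp: step_apply[OF assms(2)])
  then have "size (a j) - 1 = size (a j)" by (metis size_Diff_singleton)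
  moreover have "size (a j) > 0" using assms(1) by (simp add: nonempty_has_size)
  ultimately show False by linarith
qed

lemma finite_submsets: "finite {M. M \<subseteq># (lam::nat multiset)}"
proof -
  have "{M. M \<subseteq># lam} \<subseteq> mset ` {xs. set xs \<subseteq> set_mset lam \<and> length xs \<le> size lam}"
  proof
    fix M assume "M \<in> {M. M \<subseteq># lam}"
    then have M: "M \<subseteq># lam" by simp
    show "M \<in> mset ` {xs. set xs \<subseteq> set_mset lam \<and> length xs \<le> size lam}"
    proof
      show "M = mset (sorted_list_of_multiset M)" by simp
      show "sorted_list_of_multiset M \<in> {xs. set xs \<subseteq> set_mset lam \<and> length xs \<le> size lam}"
        using M by (auto simp: size_mset_mono mset_subset_eqD
             simp flip: size_mset[of "sorted_list_of_multiset M"])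
    qed
  qed
  moreover have "finite {xs. set xs \<subseteq> set_mset lam \<and> length xs \<le> size lam}"
    by (rule finite_lists_length_le) simp
  ultimately show ?thesis by (meson finite_imageI finite_subset)
qed

lemma finite_Conf: "finite (Conf n lam)"
proof -
  have "Conf n lam \<subseteq> {f. \<forall>x. (x \<in> {1..n} \<longrightarrow> f x \<in> {M. M \<subseteq># lam}) \<and> (x \<notin> {1..n} \<longrightarrow> f x = {#})}"
  proof
    fix f assume "f \<in> Conf n lam"
    then have z: "\<forall>j. j \<notin> {1..n} \<longrightarrow> f j = {#}" and s: "sum f {1..n} = lam"
      by (auto simp: Conf_def)
    have "f x \<subseteq># lam" if "x \<in> {1..n}" for x
    proof -
      have "sum f {1..n} = f x + sum f ({1..n} - {x})"
        using that by (simp add: sum.remove)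
      then show ?thesis using s by (metis mset_subset_eq_add_left)
    qed
    then show "f \<in> {f. \<forall>x. (x \<in> {1..n} \<longrightarrow> f x \<in> {M. M \<subseteq># lam}) \<and> (x \<notin> {1..n} \<longrightarrow> f x = {#})}"
      using z by blast
  qed
  then show ?thesis
    by (rule finite_subset) (intro finite_set_of_finite_funs finite_submsets finite_atLeastAtMost)
qed

lemma gen_opm:
  assumes a: "a \<in> Conf n lam" and n: "n \<ge> 2"
  shows "opm (Conf n lam) (gen n lam x) f a = Qop n x f a"
proof -
  let ?S = "Conf n lam"
  have fin: "finite ?S" by (rule finite_Conf)
  have key: "(\<Sum>b\<in>?S - {a}. rate n x a b * g b) = (\<Sum>j\<in>{1..n}. rr x a j * g (step n a j))" for g
  proof -
    have "(\<Sum>b\<in>?S - {a}. rate n x a b * g b)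
        = (\<Sum>b\<in>?S - {a}. \<Sum>j\<in>{1..n}. if step n a j = b then (if a j \<noteq> {#} then 1 / x j else 0) * g b else 0)"
      unfolding rate_def by (intro sum.cong refl) (auto simp: sum_distrib_right intro!: sum.cong)
    also have "\<dots> = (\<Sum>j\<in>{1..n}. \<Sum>b\<in>?S - {a}. if step n a j = b then (if a j \<noteq> {#} then 1 / x j else 0) * g b else 0)"
      by (rule sum.swap)
    also have "\<dots> = (\<Sum>j\<in>{1..n}. rr x a j * g (step n a j))"
    proof (intro sum.cong refl)
      fix j assume j: "j \<in> {1..n}"
      have "(\<Sum>b\<in>?S - {a}. if step n a j = b then (if a j \<noteq> {#} then 1 / x j else 0) * g b else 0)
          = (if step n a j \<in> ?S - {a} then (if a j \<noteq> {#} then 1 / x j else 0) * g (step n a j) else 0)"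
        using fin by (simp add: sum.delta)
      also have "\<dots> = rr x a j * g (step n a j)"
        using step_Conf[OF a j _ n] step_ne[of a j n] nxt_ne[OF n j] by (auto simp: rr_def)
      finally show "(\<Sum>b\<in>?S - {a}. if step n a j = b then (if a j \<noteq> {#} then 1 / x j else 0) * g b else 0)
          = rr x a j * g (step n a j)" .
    qed
    finally show ?thesis .
  qed
  have "opm ?S (gen n lam x) f a = gen n lam x a a * f a + (\<Sum>b\<in>?S - {a}. gen n lam x a b * f b)"
    unfolding opm_def using a fin by (simp add: sum.remove)
  also have "(\<Sum>b\<in>?S - {a}. gen n lam x a b * f b) = (\<Sum>b\<in>?S - {a}. rate n x a b * f b)"
    by (intro sum.cong) (auto simp: gen_def)
  also have "gen n lam x a a = - (\<Sum>b\<in>?S - {a}. rate n x a b * 1)" by (simp add: gen_def)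
  finally have "opm ?S (gen n lam x) f a = - (\<Sum>b\<in>?S - {a}. rate n x a b * 1) * f a + (\<Sum>b\<in>?S - {a}. rate n x a b * f b)" .
  then show ?thesis
    unfolding key Qop_def by (simp add: sum_subtractf sum_distrib_right sum_distrib_left mult.commute right_diff_distrib)
qed

abbreviation sl :: "nat multiset \<Rightarrow> nat list" where "sl \<equiv> sorted_list_of_multiset"

lemma insort_split: "insort M L = takeWhile (\<lambda>y. \<not> M \<le> y) L @ M # dropWhile (\<lambda>y. \<not> M \<le> y) L"
  by (induction L) auto

lemma sorted_le_last: "sorted L \<Longrightarrow> y \<in> set L \<Longrightarrow> y \<le> last L"
proof -
  assume s: "sorted L" and y: "y \<in> set L"
  then obtain j where j: "j < length L" "L ! j = y" by (auto simp: in_set_conv_nth)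
  then have "L ! j \<le> L ! (length L - 1)" using s by (intro sorted_nth_mono) auto
  moreover have "L \<noteq> []" using j by auto
  ultimately show ?thesis using j by (simp add: last_conv_nth)
qed

lemma sl_remove_max:
  assumes "V \<noteq> {#}"
  shows "Max_mset V = last (sl V)" "sl (V - {#Max_mset V#}) = butlast (sl V)"
proof -
  let ?L = "sl V"
  have ne: "?L \<noteq> []" using assms by (metis mset_sorted_list_of_multiset mset.simps(1))
  show 1: "Max_mset V = last ?L"
    by (rule Max_eqI) (use ne sorted_le_last[of ?L] last_in_set[OF ne] in auto)
  have "V = mset (butlast ?L @ [last ?L])" using ne by simp
  then have "V = add_mset (last ?L) (mset (butlast ?L))" by simp
  then have "V - {#last ?L#} = mset (butlast ?L)" by (metis add_mset_remove_trivial)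
  then show "sl (V - {#Max_mset V#}) = butlast ?L" unfolding 1
    by (simp add: sorted_sort_id sorted_butlast)
qed

lemma drop_remove_max:
  assumes s: "sorted L" and i: "i < length L"
  shows "mset (drop i L) \<noteq> {#}" "Max_mset (mset (drop i L)) = last L"
        "mset (drop i L) - {#Max_mset (mset (drop i L))#} = mset (drop i (butlast L))"
proof -
  have ne: "L \<noteq> []" using i by auto
  have "drop i L = drop i (butlast L @ [last L])" using ne by simp
  also have "\<dots> = drop i (butlast L) @ [last L]" using i by (simp add: drop_append)
  finally have d: "drop i L = drop i (butlast L) @ [last L]" .
  show "mset (drop i L) \<noteq> {#}" using i by simp
  show m: "Max_mset (mset (drop i L)) = last L"
  proof (rule Max_eqI)
    fix y assume "y \<in> set_mset (mset (drop i L))"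
    then have "y \<in> set L" by (metis in_set_dropD set_mset_mset)
    then show "y \<le> last L" by (rule sorted_le_last[OF s])
  qed (use d in auto)
  show "mset (drop i L) - {#Max_mset (mset (drop i L))#} = mset (drop i (butlast L))"
    unfolding m by (subst d) simp
qed

lemma take_insort:
  fixes L :: "nat list" and M :: nat
  defines "p \<equiv> length (takeWhile (\<lambda>y. \<not> M \<le> y) L)"
  assumes i: "i \<le> Suc (length L)"
  shows "mset (take i (insort M L)) = (if i \<le> p then mset (take i L) else add_mset M (mset (take (i - 1) L)))"
        "mset (drop i (insort M L)) = (if i \<le> p then add_mset M (mset (drop i L)) else mset (drop (i - 1) L))"
proof -
  have pl: "p \<le> length L" unfolding p_def by (rule length_takeWhile_le)
  have ins: "insort M L = take p L @ M # drop p L"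
    unfolding p_def by (metis insort_split takeWhile_eq_take dropWhile_eq_drop)
  have t: "mset (take i (insort M L)) = (if i \<le> p then mset (take i L) else add_mset M (mset (take (i - 1) L)))"
  proof (cases "i \<le> p")
    case True
    then show ?thesis unfolding ins using pl by (simp add: min_def)
  next
    case False
    then obtain k where k: "i = Suc (p + k)" by (metis add_Suc_right less_iff_Suc_add not_le)
    have "take i (insort M L) = take p L @ M # take k (drop p L)"
      unfolding ins k using pl by (simp add: min_def)
    moreover have "take (i - 1) L = take p L @ take k (drop p L)"
      unfolding k by (simp add: take_add)
    ultimately show ?thesis using False by simp
  qed
  show "mset (take i (insort M L)) = (if i \<le> p then mset (take i L) else add_mset M (mset (take (i - 1) L)))"
    by (rule t)
  have all: "mset (take i (insort M L)) + mset (drop i (insort M L)) = add_mset M (mset L)"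
    by (metis append_take_drop_id mset_append mset_insort)
  have L1: "mset (take j L) + mset (drop j L) = mset L" for j
    by (metis append_take_drop_id mset_append)
  show "mset (drop i (insort M L)) = (if i \<le> p then add_mset M (mset (drop i L)) else mset (drop (i - 1) L))"
  proof (cases "i \<le> p")
    case True
    then have "mset (take i L) + mset (drop i (insort M L)) = mset (take i L) + add_mset M (mset (drop i L))"
      using all t L1[of i] by simp
    then show ?thesis using True by simp
  next
    case False
    then have "add_mset M (mset (take (i - 1) L)) + mset (drop i (insort M L)) = add_mset M (mset (take (i - 1) L)) + mset (drop (i - 1) L)"
      using all t L1[of "i - 1"] by simp
    then show ?thesis using False by (metis add_left_cancel)
  qed
qed

lemma max_take_small:
  fixes L :: "nat list" and U :: "nat multiset"
  assumes U: "U \<noteq> {#}" and i: "i \<le> length (takeWhile (\<lambda>y. \<not> Max_mset U \<le> y) L)"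
  shows "Max_mset (U + mset (take i L)) = Max_mset U"
proof (rule Max_eqI)
  let ?M = "Max_mset U"
  let ?p = "length (takeWhile (\<lambda>y. \<not> ?M \<le> y) L)"
  fix y assume y: "y \<in> set_mset (U + mset (take i L))"
  show "y \<le> ?M"
  proof (cases "y \<in># U")
    case True then show ?thesis by simp
  next
    case False
    then have "y \<in> set (take i L)" using y by simp
    moreover have "take i L = take i (take ?p L)" using i by (simp add: min_def)
    ultimately have "y \<in> set (take ?p L)" by (metis in_set_takeD)
    then have "y \<in> set (takeWhile (\<lambda>y. \<not> ?M \<le> y) L)" by (metis takeWhile_eq_take)
    then show ?thesis by (auto dest: set_takeWhileD)
  qed
qed (use U in auto)

lemma max_take_big:
  fixes L :: "nat list" and U :: "nat multiset"
  assumes s: "sorted L" and i: "1 \<le> i" "i \<le> length L" and U: "\<forall>y\<in>#U. y \<le> L ! (i - 1)"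
  shows "Max_mset (U + mset (take i L)) = L ! (i - 1)"
        "U + mset (take i L) - {#L ! (i - 1)#} = U + mset (take (i - 1) L)"
        "add_mset (L ! (i - 1)) (mset (drop i L)) = mset (drop (i - 1) L)"
proof -
  have i1: "i - 1 < length L" using i by simp
  have tk: "take i L = take (i - 1) L @ [L ! (i - 1)]"
    using take_Suc_conv_app_nth[OF i1] i by simp
  show "Max_mset (U + mset (take i L)) = L ! (i - 1)"
  proof (rule Max_eqI)
    fix y assume y: "y \<in> set_mset (U + mset (take i L))"
    show "y \<le> L ! (i - 1)"
    proof (cases "y \<in># U")
      case True then show ?thesis using U by simp
    next
      case False
      then have "y \<in> set (take i L)" using y by simp
      then obtain j where j: "j < length (take i L)" "take i L ! j = y" by (auto simp: in_set_conv_nth)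
      then have "j \<le> i - 1" "j < length L" using i by auto
      then have "L ! j \<le> L ! (i - 1)" using s i1 by (intro sorted_nth_mono) auto
      then show ?thesis using j by simp
    qed
  qed (use tk in auto)
  show "U + mset (take i L) - {#L ! (i - 1)#} = U + mset (take (i - 1) L)"
    unfolding tk by simp
  show "add_mset (L ! (i - 1)) (mset (drop i L)) = mset (drop (i - 1) L)"
    using Cons_nth_drop_Suc[OF i1] i by (metis Suc_diff_1 less_le_trans mset.simps(2) zero_less_one)
qed

definition wt :: "real \<Rightarrow> nat \<Rightarrow> nat \<Rightarrow> real" where
  "wt c m i = (if i = 0 then c ^ m else c ^ (m - i) * (1 - c))"

lemma wt_Suc: "i \<le> m \<Longrightarrow> wt c (Suc m) i = c * wt c m i"
  by (simp add: wt_def Suc_diff_le)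

lemma wt_last: "wt c (Suc m) (Suc m) = 1 - c"
  by (simp add: wt_def)

lemma wt_sum: "(\<Sum>i\<le>m. wt c m i) = 1"
proof (induction m)
  case 0 then show ?case by (simp add: wt_def)
next
  case (Suc m)
  have "(\<Sum>i\<le>Suc m. wt c (Suc m) i) = (\<Sum>i\<le>m. c * wt c m i) + (1 - c)"
    by (simp add: wt_Suc wt_last)
  also have "\<dots> = 1" using Suc by (simp add: sum_distrib_left[symmetric])
  finally show ?case .
qed

lemma alg_ne:
  fixes X Y Hh :: "nat \<Rightarrow> real"
  assumes p: "p \<le> m" and ab: "\<alpha> = c * \<beta>"
  shows "\<beta> * ((\<Sum>i\<le>Suc m. wt c (Suc m) i * (if i \<le> p then X i else Y (i - 1))) - (\<Sum>i\<le>m. wt c m i * Y i))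
       + (if m \<noteq> 0 then \<alpha> * ((\<Sum>i\<le>m - 1. wt c (m - 1) i * Hh i) - (\<Sum>i\<le>m. wt c m i * Y i)) else 0)
     = (\<Sum>i\<le>m. wt c m i * (\<alpha> * ((if i \<le> p then X i else Y (i - 1)) - Y i)
                             + (if i < m then \<beta> * (Hh i - Y i) else 0)))"
proof -
  define Z where "Z i = (if i \<le> p then X i else Y (i - 1))" for i
  have Zm: "Z (Suc m) = Y m" using p by (simp add: Z_def)
  have A: "(\<Sum>i\<le>Suc m. wt c (Suc m) i * Z i) = c * (\<Sum>i\<le>m. wt c m i * Z i) + (1 - c) * Y m"
    by (simp add: wt_Suc wt_last Zm sum_distrib_left mult.assoc)
  show ?thesis
  proof (cases m)
    case 0
    then show ?thesis using A ab Zm unfolding Z_def[symmetric] by (simp add: wt_def algebra_simps)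
  next
    case (Suc m')
    have B: "(\<Sum>i\<le>m. wt c m i * Y i) = (\<Sum>i\<le>m'. wt c m i * Y i) + (1 - c) * Y m"
      using Suc by (simp add: wt_last)
    have H: "(\<Sum>i\<le>m'. wt c m i * Hh i) = c * (\<Sum>i\<le>m'. wt c m' i * Hh i)"
      using Suc by (simp add: wt_Suc sum_distrib_left mult.assoc)
    have R: "(\<Sum>i\<le>m. wt c m i * (\<alpha> * (Z i - Y i) + (if i < m then \<beta> * (Hh i - Y i) else 0)))
        = \<alpha> * (\<Sum>i\<le>m. wt c m i * Z i) - \<alpha> * (\<Sum>i\<le>m. wt c m i * Y i)
          + \<beta> * (\<Sum>i\<le>m'. wt c m i * Hh i) - \<beta> * (\<Sum>i\<le>m'. wt c m i * Y i)"
    proof -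
      have "(\<Sum>i\<le>m. wt c m i * (\<alpha> * (Z i - Y i) + (if i < m then \<beta> * (Hh i - Y i) else 0)))
          = (\<Sum>i\<le>m. \<alpha> * (wt c m i * Z i) - \<alpha> * (wt c m i * Y i)) + (\<Sum>i\<le>m. if i < m then \<beta> * (wt c m i * Hh i) - \<beta> * (wt c m i * Y i) else 0)"
        unfolding sum.distrib[symmetric] by (intro sum.cong refl) (simp add: algebra_simps)
      also have "(\<Sum>i\<le>m. if i < m then \<beta> * (wt c m i * Hh i) - \<beta> * (wt c m i * Y i) else 0)
          = (\<Sum>i\<le>m'. \<beta> * (wt c m i * Hh i) - \<beta> * (wt c m i * Y i))"
        using Suc by (simp add: atMost_Suc)
      finally show ?thesis
        by (simp add: sum_subtractf sum_distrib_left)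
    qed
    show ?thesis
      unfolding Z_def[symmetric] R A
      using Suc B H ab by (simp add: algebra_simps wt_last)
  qed
qed

lemma alg_e:
  fixes Y Hh :: "nat \<Rightarrow> real"
  assumes ab: "\<alpha> = c * \<beta>"
  shows "(if m \<noteq> 0 then \<alpha> * ((\<Sum>i\<le>m - 1. wt c (m - 1) i * Hh i) - (\<Sum>i\<le>m. wt c m i * Y i)) else 0)
     = (\<Sum>i\<le>m. wt c m i * ((if i \<noteq> 0 then \<alpha> * (Y (i - 1) - Y i) else 0)
                             + (if i < m then \<beta> * (Hh i - Y i) else 0)))"
proof (cases m)
  case 0
  then show ?thesis by simp
next
  case (Suc m')
  have coef: "\<alpha> * wt c m (Suc i) + (if i = 0 then \<alpha> * c ^ m else 0) = \<beta> * wt c m i" if "i \<le> m'" for i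
    using that Suc ab
    by (cases "i = 0") (auto simp: wt_def algebra_simps Suc_diff_le)
  have H: "(\<Sum>i\<le>m'. wt c m i * Hh i) = c * (\<Sum>i\<le>m'. wt c m' i * Hh i)"
    using Suc by (simp add: wt_Suc sum_distrib_left mult.assoc)
  have S1: "(\<Sum>i\<le>m. wt c m i * (if i \<noteq> 0 then \<alpha> * (Y (i - 1) - Y i) else 0))
      = (\<Sum>i\<le>m'. \<alpha> * wt c m (Suc i) * Y i) - (\<Sum>i\<le>m. \<alpha> * wt c m i * Y i) + \<alpha> * c ^ m * Y 0"
  proof -
    have "(\<Sum>i\<le>m. wt c m i * (if i \<noteq> 0 then \<alpha> * (Y (i - 1) - Y i) else 0))
        = (\<Sum>i\<le>m'. wt c m (Suc i) * (\<alpha> * (Y i - Y (Suc i))))"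
      unfolding Suc by (subst sum.atMost_Suc_shift) simp
    also have "\<dots> = (\<Sum>i\<le>m'. \<alpha> * wt c m (Suc i) * Y i) - (\<Sum>i\<le>m'. \<alpha> * wt c m (Suc i) * Y (Suc i))"
      by (simp add: sum_subtractf[symmetric] algebra_simps)
    also have "(\<Sum>i\<le>m'. \<alpha> * wt c m (Suc i) * Y (Suc i)) = (\<Sum>i\<le>m. \<alpha> * wt c m i * Y i) - \<alpha> * c ^ m * Y 0"
      unfolding Suc by (simp only: sum.atMost_Suc_shift) (simp add: wt_def)
    finally show ?thesis by simp
  qed
  have S2: "(\<Sum>i\<le>m. wt c m i * (if i < m then \<beta> * (Hh i - Y i) else 0))
      = \<beta> * (\<Sum>i\<le>m'. wt c m i * Hh i) - (\<Sum>i\<le>m'. \<beta> * wt c m i * Y i)"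
    unfolding Suc by (simp add: atMost_Suc sum_subtractf[symmetric] sum_distrib_left algebra_simps)
  have S3: "(\<Sum>i\<le>m'. \<alpha> * wt c m (Suc i) * Y i) + \<alpha> * c ^ m * Y 0 = (\<Sum>i\<le>m'. \<beta> * wt c m i * Y i)"
  proof -
    have "(\<Sum>i\<le>m'. \<beta> * wt c m i * Y i) = (\<Sum>i\<le>m'. (\<alpha> * wt c m (Suc i) + (if i = 0 then \<alpha> * c ^ m else 0)) * Y i)"
      by (intro sum.cong refl) (simp add: coef)
    also have "\<dots> = (\<Sum>i\<le>m'. \<alpha> * wt c m (Suc i) * Y i + (if i = 0 then \<alpha> * c ^ m * Y i else 0))"
      by (intro sum.cong refl) (auto simp: distrib_right)
    also have "\<dots> = (\<Sum>i\<le>m'. \<alpha> * wt c m (Suc i) * Y i) + (\<Sum>i\<le>m'. if i = 0 then \<alpha> * c ^ m * Y i else 0)"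
      by (rule sum.distrib)
    also have "(\<Sum>i\<le>m'. if i = 0 then \<alpha> * c ^ m * Y i else 0) = \<alpha> * c ^ m * Y 0"
      by (simp add: sum.delta')
    finally show ?thesis by simp
  qed
  have "(\<Sum>i\<le>m. wt c m i * ((if i \<noteq> 0 then \<alpha> * (Y (i - 1) - Y i) else 0)
                             + (if i < m then \<beta> * (Hh i - Y i) else 0)))
      = (\<Sum>i\<le>m. wt c m i * (if i \<noteq> 0 then \<alpha> * (Y (i - 1) - Y i) else 0))
        + (\<Sum>i\<le>m. wt c m i * (if i < m then \<beta> * (Hh i - Y i) else 0))"
    by (simp add: sum.distrib[symmetric] distrib_left)
  also have "\<dots> = \<alpha> * ((\<Sum>i\<le>m - 1. wt c (m - 1) i * Hh i) - (\<Sum>i\<le>m. wt c m i * Y i))"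
    unfolding S1 S2 H using S3 Suc ab by (simp add: sum_distrib_left[symmetric] algebra_simps mult.assoc)
  finally show ?thesis using Suc by simp
qed

definition KK :: "(nat multiset \<Rightarrow> nat multiset \<Rightarrow> real) \<Rightarrow> real \<Rightarrow> nat multiset \<Rightarrow> nat multiset \<Rightarrow> real" where
  "KK G c U V = (\<Sum>i\<le>size V. wt c (size V) i * G (U + mset (take i (sl V))) (mset (drop i (sl V))))"

lemma size_sl: "length (sl V) = size V"
  by (metis mset_sorted_list_of_multiset size_mset)

lemma local_id:
  fixes G :: "nat multiset \<Rightarrow> nat multiset \<Rightarrow> real" and Hf :: "nat multiset \<Rightarrow> nat multiset \<Rightarrow> nat \<Rightarrow> real"
  assumes ab: "\<alpha> = c * \<beta>"
  shows "(if U \<noteq> {#} then \<beta> * (KK G c (U - {#Max_mset U#}) (add_mset (Max_mset U) V) - KK G c U V) else 0)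
       + (if V \<noteq> {#} then \<alpha> * (KK (\<lambda>A B. Hf A B (Max_mset V)) c U (V - {#Max_mset V#}) - KK G c U V) else 0)
     = (\<Sum>i\<le>size V. wt c (size V) i *
          ((if U + mset (take i (sl V)) \<noteq> {#} then \<alpha> * (G (U + mset (take i (sl V)) - {#Max_mset (U + mset (take i (sl V)))#})
                   (add_mset (Max_mset (U + mset (take i (sl V)))) (mset (drop i (sl V))))
                 - G (U + mset (take i (sl V))) (mset (drop i (sl V)))) else 0)
         + (if mset (drop i (sl V)) \<noteq> {#} then \<beta> * (Hf (U + mset (take i (sl V)))
                   (mset (drop i (sl V)) - {#Max_mset (mset (drop i (sl V)))#}) (Max_mset (mset (drop i (sl V))))
                 - G (U + mset (take i (sl V))) (mset (drop i (sl V)))) else 0)))"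
  (is "?LHS = (\<Sum>i\<le>size V. wt c (size V) i * (?g i + ?h i))")
proof -
  define L where "L = sl V"
  define m where "m = size V"
  have sL: "sorted L" and lL: "length L = m" unfolding L_def m_def by (auto simp: size_sl)
  define Y where "Y j = G (U + mset (take j L)) (mset (drop j L))" for j
  define Hh where "Hh j = Hf (U + mset (take j L)) (mset (drop j (butlast L))) (last L)" for j
  have KGUV: "KK G c U V = (\<Sum>i\<le>m. wt c m i * Y i)"
    unfolding KK_def Y_def L_def m_def ..
  have hterm: "?h i = (if i < m then \<beta> * (Hh i - Y i) else 0)" if "i \<le> m" for i
  proof (cases "i < m")
    case True
    show ?thesis using drop_remove_max[OF sL, of i] True lL
      unfolding Hh_def Y_def L_def[symmetric] by simp
  next
    case False
    then show ?thesis using that lL unfolding L_def[symmetric] by simp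
  qed
  have KH: "KK (\<lambda>A B. Hf A B (Max_mset V)) c U (V - {#Max_mset V#}) = (\<Sum>i\<le>m - 1. wt c (m - 1) i * Hh i)"
    if V: "V \<noteq> {#}"
  proof -
    have mx: "Max_mset V = last L" "sl (V - {#Max_mset V#}) = butlast L"
      using sl_remove_max[OF V] unfolding L_def by auto
    have sz: "size (V - {#Max_mset V#}) = m - 1"
      using V unfolding m_def by (simp add: size_Diff_singleton)
    show ?thesis
      unfolding KK_def sz mx(2) unfolding mx(1) Hh_def
    proof (intro sum.cong refl)
      fix i assume "i \<in> {..m - 1}"
      then have "i < length L" using V lL unfolding m_def by (auto simp: nonempty_has_size)
      then show "wt c (m - 1) i * Hf (U + mset (take i (butlast L))) (mset (drop i (butlast L))) (last L) =
                 wt c (m - 1) i * Hf (U + mset (take i L)) (mset (drop i (butlast L))) (last L)"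
        by (simp add: take_butlast)
    qed
  qed
  have Vm: "V \<noteq> {#} \<longleftrightarrow> m \<noteq> 0" unfolding m_def by simp
  show ?thesis
  proof (cases "U = {#}")
    case True
    have gterm: "?g i = (if i \<noteq> 0 then \<alpha> * (Y (i - 1) - Y i) else 0)" if "i \<le> m" for i
    proof (cases "i = 0")
      case False
      have "1 \<le> i" "i \<le> length L" using False that lL by auto
      note mt = max_take_big[OF sL this, of U]
      show ?thesis using mt False True unfolding Y_def L_def[symmetric] by simp
    qed (simp add: True)
    have "?LHS = (if m \<noteq> 0 then \<alpha> * ((\<Sum>i\<le>m - 1. wt c (m - 1) i * Hh i) - (\<Sum>i\<le>m. wt c m i * Y i)) else 0)"
      using True KH KGUV Vm by simp
    also have "\<dots> = (\<Sum>i\<le>m. wt c m i * ((if i \<noteq> 0 then \<alpha> * (Y (i - 1) - Y i) else 0)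
                             + (if i < m then \<beta> * (Hh i - Y i) else 0)))"
      by (rule alg_e[OF ab])
    also have "\<dots> = (\<Sum>i\<le>size V. wt c (size V) i * (?g i + ?h i))"
      unfolding m_def[symmetric]
    proof (intro sum.cong refl)
      fix i assume "i \<in> {..m}"
      then have i: "i \<le> m" by simp
      show "wt c m i * ((if i \<noteq> 0 then \<alpha> * (Y (i - 1) - Y i) else 0) + (if i < m then \<beta> * (Hh i - Y i) else 0))
          = wt c m i * (?g i + ?h i)"
        by (simp only: gterm[OF i] hterm[OF i])
    qed
    finally show ?thesis .
  next
    case False
    define M where "M = Max_mset U"
    define p where "p = length (takeWhile (\<lambda>y. \<not> M \<le> y) L)"
    have pm: "p \<le> m" unfolding p_def using lL length_takeWhile_le by metis
    have MU: "M \<in># U" using False by (simp add: M_def)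
    define X where "X i = G (U - {#M#} + mset (take i L)) (add_mset M (mset (drop i L)))" for i
    define Z where "Z i = (if i \<le> p then X i else Y (i - 1))" for i
    have gterm: "?g i = \<alpha> * (Z i - Y i)" if "i \<le> m" for i
    proof (cases "i \<le> p")
      case True
      have mx: "Max_mset (U + mset (take i L)) = M"
        using max_take_small[OF False, of i L] True unfolding p_def M_def by simp
      show ?thesis using True False MU unfolding Z_def X_def Y_def L_def[symmetric] mx
        by (simp add: multiset_diff_union_assoc[symmetric] add_mset_remove_trivial)
    next
      case F: False
      have i1: "1 \<le> i" "i \<le> length L" using F that lL by auto
      have plt: "p < length L" using F that lL by auto
      have "\<not> (\<not> M \<le> L ! p)" using nth_length_takeWhile[of "\<lambda>y. \<not> M \<le> y" L] plt unfolding p_def by simp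
      moreover have "L ! p \<le> L ! (i - 1)" using sL F i1 by (intro sorted_nth_mono) auto
      ultimately have "M \<le> L ! (i - 1)" by simp
      then have "\<forall>y\<in>#U. y \<le> L ! (i - 1)" unfolding M_def using False by (meson Max_ge finite_set_mset le_trans)
      note mt = max_take_big[OF sL i1 this]
      show ?thesis using mt F False unfolding Z_def Y_def L_def[symmetric] by simp
    qed
    have KG2: "KK G c (U - {#M#}) (add_mset M V) = (\<Sum>i\<le>Suc m. wt c (Suc m) i * Z i)"
      unfolding KK_def
    proof -
      have sz: "size (add_mset M V) = Suc m" unfolding m_def by simp
      have sl2: "sl (add_mset M V) = insort M L" unfolding L_def by simp
      show "(\<Sum>i\<le>size (add_mset M V). wt c (size (add_mset M V)) i * G (U - {#M#} + mset (take i (sl (add_mset M V)))) (mset (drop i (sl (add_mset M V))))) =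
             (\<Sum>i\<le>Suc m. wt c (Suc m) i * Z i)"
        unfolding sz sl2
      proof (intro sum.cong refl)
        fix i assume "i \<in> {..Suc m}"
        then have i: "i \<le> Suc (length L)" using lL by simp
        note ti = take_insort[OF i, of M, folded p_def]
        show "wt c (Suc m) i * G (U - {#M#} + mset (take i (insort M L))) (mset (drop i (insort M L))) = wt c (Suc m) i * Z i"
        proof (cases "i \<le> p")
          case True then show ?thesis using ti unfolding Z_def X_def by simp
        next
          case False then show ?thesis using ti MU unfolding Z_def Y_def
            by (simp add: add_mset_remove_trivial_If insert_DiffM)
        qed
      qed
    qed
    have "?LHS = \<beta> * ((\<Sum>i\<le>Suc m. wt c (Suc m) i * (if i \<le> p then X i else Y (i - 1))) - (\<Sum>i\<le>m. wt c m i * Y i))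
       + (if m \<noteq> 0 then \<alpha> * ((\<Sum>i\<le>m - 1. wt c (m - 1) i * Hh i) - (\<Sum>i\<le>m. wt c m i * Y i)) else 0)"
      using False KH KGUV KG2 Vm unfolding M_def[symmetric] Z_def by simp
    also have "\<dots> = (\<Sum>i\<le>m. wt c m i * (\<alpha> * ((if i \<le> p then X i else Y (i - 1)) - Y i)
                             + (if i < m then \<beta> * (Hh i - Y i) else 0)))"
      by (rule alg_ne[OF pm ab])
    also have "\<dots> = (\<Sum>i\<le>size V. wt c (size V) i * (?g i + ?h i))"
      unfolding m_def[symmetric]
    proof (intro sum.cong refl)
      fix i assume "i \<in> {..m}"
      then have i: "i \<le> m" by simp
      show "wt c m i * (\<alpha> * ((if i \<le> p then X i else Y (i - 1)) - Y i) + (if i < m then \<beta> * (Hh i - Y i) else 0))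
          = wt c m i * (?g i + ?h i)"
        by (simp only: gterm[OF i] hterm[OF i] Z_def)
    qed
    finally show ?thesis .
  qed
qed

definition mv :: "nat \<Rightarrow> nat \<Rightarrow> (nat \<Rightarrow> nat multiset) \<Rightarrow> (nat \<Rightarrow> nat multiset)" where
  "mv k i a = a(k := a k + mset (take i (sl (a (Suc k)))), Suc k := mset (drop i (sl (a (Suc k)))))"

definition Kop :: "nat \<Rightarrow> real \<Rightarrow> ((nat \<Rightarrow> nat multiset) \<Rightarrow> real) \<Rightarrow> (nat \<Rightarrow> nat multiset) \<Rightarrow> real" where
  "Kop k c f a = (\<Sum>i\<le>size (a (Suc k)). wt c (size (a (Suc k))) i * f (mv k i a))"

definition Kmat :: "nat \<Rightarrow> real \<Rightarrow> (nat \<Rightarrow> nat multiset) \<Rightarrow> (nat \<Rightarrow> nat multiset) \<Rightarrow> real" where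
  "Kmat k c a d = (\<Sum>i\<le>size (a (Suc k)). wt c (size (a (Suc k))) i * (if mv k i a = d then 1 else 0))"

lemma sum_two_eq:
  fixes g h :: "nat \<Rightarrow> 'b::comm_monoid_add"
  assumes "finite I" "k \<in> I" "k' \<in> I" "k \<noteq> k'"
    and "\<And>j. j \<in> I \<Longrightarrow> j \<noteq> k \<Longrightarrow> j \<noteq> k' \<Longrightarrow> g j = h j"
    and "g k + g k' = h k + h k'"
  shows "sum g I = sum h I"
proof -
  have r: "sum f I = f k + f k' + sum f (I - {k} - {k'})" for f :: "nat \<Rightarrow> 'b"
  proof -
    have "sum f I = f k + sum f (I - {k})" using assms(1,2) by (rule sum.remove)
    also have "sum f (I - {k}) = f k' + sum f (I - {k} - {k'})"
      using assms(1,3,4) by (intro sum.remove) auto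
    finally show ?thesis by (simp add: add.assoc)
  qed
  have "sum g I = g k + g k' + sum g (I - {k} - {k'})" by (rule r)
  also have "sum g (I - {k} - {k'}) = sum h (I - {k} - {k'})"
    using assms(5) by (intro sum.cong) auto
  also have "g k + g k' + sum h (I - {k} - {k'}) = h k + h k' + sum h (I - {k} - {k'})"
    using assms(6) by simp
  also have "\<dots> = sum h I" by (rule r[symmetric])
  finally show ?thesis .
qed

lemma mv_Conf:
  assumes a: "a \<in> Conf n lam" and k: "1 \<le> k" "Suc k \<le> n"
  shows "mv k i a \<in> Conf n lam"
proof -
  have "sum (mv k i a) {1..n} = sum a {1..n}"
  proof (rule sum_two_eq[of "{1..n}" k "Suc k"])
    show "mv k i a k + mv k i a (Suc k) = a k + a (Suc k)"
      by (simp add: mv_def add.assoc flip: mset_append)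
  qed (use k in \<open>auto simp: mv_def\<close>)
  moreover have "\<forall>j. j \<notin> {1..n} \<longrightarrow> mv k i a j = {#}" using a k by (auto simp: Conf_def mv_def)
  ultimately show ?thesis using a by (simp add: Conf_def)
qed

lemma Kmat_opm:
  assumes a: "a \<in> Conf n lam" and k: "1 \<le> k" "Suc k \<le> n"
  shows "opm (Conf n lam) (Kmat k c) f a = Kop k c f a"
proof -
  have "opm (Conf n lam) (Kmat k c) f a
      = (\<Sum>i\<le>size (a (Suc k)). \<Sum>d\<in>Conf n lam. wt c (size (a (Suc k))) i * (if mv k i a = d then f d else 0))"
    unfolding opm_def Kmat_def
    by (subst sum.swap) (intro sum.cong refl, simp add: sum_distrib_right, intro sum.cong refl, simp)
  also have "\<dots> = Kop k c f a"
    unfolding Kop_def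
    by (intro sum.cong refl) (simp add: sum_distrib_left[symmetric] sum.delta finite_Conf mv_Conf[OF a k])
  finally show ?thesis .
qed

lemma Kmat_sum:
  assumes a: "a \<in> Conf n lam" and k: "1 \<le> k" "Suc k \<le> n"
  shows "(\<Sum>d\<in>Conf n lam. Kmat k c a d) = 1"
  using Kmat_opm[OF a k, of c "\<lambda>_. 1"] by (simp add: opm_def Kop_def wt_sum)

lemma Kmat_restr:
  assumes "Kmat k c a d \<noteq> 0" "l < k"
  shows "restr l d = restr l a"
proof -
  have "\<exists>i. mv k i a = d"
  proof (rule ccontr)
    assume "\<not> (\<exists>i. mv k i a = d)"
    then have "Kmat k c a d = 0" unfolding Kmat_def by (intro sum.neutral) auto
    then show False using assms(1) by simp
  qed
  then obtain i where i: "mv k i a = d" by blast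
  show ?thesis unfolding restr_def
  proof (intro map_cong refl)
    fix j assume "j \<in> set [1..<l + 1]"
    then have "j \<noteq> k" "j \<noteq> Suc k" using assms(2) by auto
    then show "d j = a j" unfolding i[symmetric] mv_def by simp
  qed
qed

lemma Kmat_empty:
  assumes "a (Suc k) = {#}"
  shows "Kmat k c a d = (if d = a then 1 else 0)"
proof -
  have "mv k 0 a = a(k := a k, Suc k := a (Suc k))"
    unfolding mv_def by (simp only: take_0 drop_0 mset.simps(1) add_0_right mset_sorted_list_of_multiset)
  then have mv0: "mv k 0 a = a" by (simp only: fun_upd_triv)
  have "Kmat k c a d = wt c 0 0 * (if mv k 0 a = d then 1 else 0)"
    unfolding Kmat_def assms by simp
  then show ?thesis unfolding mv0 by (auto simp: wt_def)
qed

lemma nxt_Suc: "j \<in> {1..n} \<Longrightarrow> 1 \<le> k \<Longrightarrow> nxt n j = Suc k \<Longrightarrow> j = k"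
  by (auto simp: nxt_def split: if_splits)

lemma mv_step_comm:
  assumes jk: "j \<noteq> k" "j \<noteq> Suc k" and nk: "nxt n j \<noteq> Suc k" and nj: "nxt n j \<noteq> j"
  shows "mv k i (step n a j) = step n (mv k i a) j"
proof
  fix z
  define T where "T = mset (take i (sl (a (Suc k))))"
  define D where "D = mset (drop i (sl (a (Suc k))))"
  have mj: "mv k i a j = a j" using jk by (simp add: mv_def)
  have s1: "step n a j (Suc k) = a (Suc k)" using jk nk by (simp add: step_apply[OF nj])
  have mvz: "mv k i b z = (if z = Suc k then mset (drop i (sl (b (Suc k)))) else if z = k then b k + mset (take i (sl (b (Suc k)))) else b z)" for b
    by (simp add: mv_def)
  have L: "mv k i (step n a j) z = (if z = Suc k then D else if z = k then step n a j k + T else step n a j z)"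
    unfolding mvz s1 T_def D_def ..
  have R: "step n (mv k i a) j z = (if z = j then mv k i a j - {#Max_mset (mv k i a j)#}
            else if z = nxt n j then mv k i a z + {#Max_mset (mv k i a j)#} else mv k i a z)"
    by (rule step_apply[OF nj])
  have mvz': "mv k i a z = (if z = Suc k then D else if z = k then a k + T else a z)"
    unfolding mvz T_def D_def ..
  show "mv k i (step n a j) z = step n (mv k i a) j z"
    unfolding L R mj mvz' step_apply[OF nj] using jk nk by (auto simp: ac_simps)
qed

lemma step_k:
  assumes "nxt n k = Suc k"
  shows "step n a k = a(k := a k - {#Max_mset (a k)#}, Suc k := add_mset (Max_mset (a k)) (a (Suc k)))"
  using assms by (simp add: step_def Let_def)

lemma step_Sk:
  assumes "nxt n (Suc k) = q" "q \<noteq> Suc k"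
  shows "step n a (Suc k) = (a(Suc k := a (Suc k) - {#Max_mset (a (Suc k))#}))(q := a q + {#Max_mset (a (Suc k))#})"
  using assms by (simp add: step_def Let_def)

lemma Qop_Kop:
  assumes n: "n \<ge> 3" and k: "1 \<le> k" "Suc k \<le> n"
    and xk: "x k > 0" and xSk: "x (Suc k) > 0"
  shows "Qop n (x(k := x (Suc k), Suc k := x k)) (Kop k (x (Suc k) / x k) f) a
       = Kop k (x (Suc k) / x k) (Qop n x f) a"
proof -
  define x' where "x' = x(k := x (Suc k), Suc k := x k)"
  define c where "c = x (Suc k) / x k"
  define \<alpha> where "\<alpha> = 1 / x k"
  define \<beta> where "\<beta> = 1 / x (Suc k)"
  have ab: "\<alpha> = c * \<beta>" unfolding \<alpha>_def \<beta>_def c_def using xk xSk by simp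
  define q where "q = nxt n (Suc k)"
  have nk: "nxt n k = Suc k" using k by (simp add: nxt_def)
  have q: "q \<noteq> k" "q \<noteq> Suc k" using n k by (auto simp: q_def nxt_def)
  define A where "A j = rr x' a j * (Kop k c f (step n a j) - Kop k c f a)" for j
  define B where "B j = (\<Sum>i\<le>size (a (Suc k)). wt c (size (a (Suc k))) i *
                     (rr x (mv k i a) j * (f (step n (mv k i a) j) - f (mv k i a))))" for j
  have lhs: "Qop n x' (Kop k c f) a = sum A {1..n}" unfolding Qop_def A_def ..
  have rhs: "Kop k c (Qop n x f) a = sum B {1..n}"
    unfolding Kop_def Qop_def B_def by (subst sum.swap) (simp add: sum_distrib_left)
  have "sum A {1..n} = sum B {1..n}"
  proof (rule sum_two_eq[of "{1..n}" k "Suc k"])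
    show "finite {1..n}" "k \<in> {1..n}" "Suc k \<in> {1..n}" "k \<noteq> Suc k" using k by auto
  next
    fix j assume j: "j \<in> {1..n}" "j \<noteq> k" "j \<noteq> Suc k"
    have nj: "nxt n j \<noteq> j" using nxt_ne[of n j] n j by auto
    have nSk: "nxt n j \<noteq> Suc k" using nxt_Suc[OF j(1) k(1)] j by auto
    have r1: "rr x' a j = rr x a j" using j by (simp add: rr_def x'_def)
    have r2: "rr x (mv k i a) j = rr x a j" for i using j by (simp add: rr_def mv_def)
    have s1: "step n a j (Suc k) = a (Suc k)" using j nSk by (simp add: step_apply[OF nj])
    have "Kop k c f (step n a j) = (\<Sum>i\<le>size (a (Suc k)). wt c (size (a (Suc k))) i * f (step n (mv k i a) j))"
      unfolding Kop_def s1 using mv_step_comm[OF j(2,3) nSk nj] by simp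
    then show "A j = B j"
      unfolding A_def B_def r1 r2 Kop_def
      by (simp add: sum_subtractf[symmetric] sum_distrib_left algebra_simps)
  next
    define U where "U = a k"
    define V where "V = a (Suc k)"
    define G where "G P R = f (a(k := P, Suc k := R))" for P R
    define Hf where "Hf P R e = f ((a(k := P, Suc k := R))(q := a q + {#e#}))" for P R e
    have KKa: "Kop k c f a = KK G c U V"
      unfolding Kop_def KK_def G_def U_def V_def mv_def ..
    have KKk: "Kop k c f (step n a k) = KK G c (U - {#Max_mset U#}) (add_mset (Max_mset U) V)"
      unfolding step_k[OF nk] Kop_def KK_def G_def U_def V_def mv_def by simp
    have KKSk: "Kop k c f (step n a (Suc k)) = KK (\<lambda>P R. Hf P R (Max_mset V)) c U (V - {#Max_mset V#})"
    proof -
      have e: "((a(Suc k := V - {#Max_mset V#}))(q := a q + {#Max_mset V#}))(k := P, Suc k := R)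
             = (a(k := P, Suc k := R))(q := a q + {#Max_mset V#})" for P R
        using q by (auto simp: fun_eq_iff)
      have e': "a(q := X, k := P, Suc k := R) = a(k := P, Suc k := R, q := X)" for X P R
        using q by (auto simp: fun_eq_iff)
      show ?thesis
        unfolding step_Sk[OF q_def[symmetric] q(2)] Kop_def KK_def Hf_def V_def[symmetric]
        using q by (simp add: mv_def e U_def e')
    qed
    have Ak: "A k = (if U \<noteq> {#} then \<beta> * (KK G c (U - {#Max_mset U#}) (add_mset (Max_mset U) V) - KK G c U V) else 0)"
      unfolding A_def KKk KKa by (simp add: rr_def x'_def \<beta>_def U_def)
    have ASk: "A (Suc k) = (if V \<noteq> {#} then \<alpha> * (KK (\<lambda>P R. Hf P R (Max_mset V)) c U (V - {#Max_mset V#}) - KK G c U V) else 0)"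
      unfolding A_def KKSk KKa by (simp add: rr_def x'_def \<alpha>_def V_def)
    have mvi: "mv k i a = a(k := U + mset (take i (sl V)), Suc k := mset (drop i (sl V)))" for i
      unfolding mv_def U_def V_def ..
    have Bterm: "wt c (size V) i * (rr x (mv k i a) k * (f (step n (mv k i a) k) - f (mv k i a)))
        + wt c (size V) i * (rr x (mv k i a) (Suc k) * (f (step n (mv k i a) (Suc k)) - f (mv k i a)))
      = wt c (size V) i *
          ((if U + mset (take i (sl V)) \<noteq> {#} then \<alpha> * (G (U + mset (take i (sl V)) - {#Max_mset (U + mset (take i (sl V)))#})
                   (add_mset (Max_mset (U + mset (take i (sl V)))) (mset (drop i (sl V))))
                 - G (U + mset (take i (sl V))) (mset (drop i (sl V)))) else 0)
         + (if mset (drop i (sl V)) \<noteq> {#} then \<beta> * (Hf (U + mset (take i (sl V)))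
                   (mset (drop i (sl V)) - {#Max_mset (mset (drop i (sl V)))#}) (Max_mset (mset (drop i (sl V))))
                 - G (U + mset (take i (sl V))) (mset (drop i (sl V)))) else 0))" for i
    proof -
      let ?P = "U + mset (take i (sl V))" and ?R = "mset (drop i (sl V))"
      have e1: "step n (mv k i a) k = a(k := ?P - {#Max_mset ?P#}, Suc k := add_mset (Max_mset ?P) ?R)"
        unfolding step_k[OF nk] mvi by simp
      have e2: "step n (mv k i a) (Suc k) = (a(k := ?P, Suc k := ?R - {#Max_mset ?R#}))(q := a q + {#Max_mset ?R#})"
        unfolding step_Sk[OF q_def[symmetric] q(2)] mvi using q by (simp add: fun_upd_twist)
      have r1: "rr x (mv k i a) k = (if ?P \<noteq> {#} then \<alpha> else 0)" unfolding mvi by (simp add: rr_def \<alpha>_def)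
      have r2: "rr x (mv k i a) (Suc k) = (if ?R \<noteq> {#} then \<beta> else 0)" unfolding mvi by (simp add: rr_def \<beta>_def)
      have ia: "w * ((if P then \<alpha> else 0) * (a1 - b)) + w * ((if Q then \<beta> else 0) * (a2 - b))
          = w * ((if P then \<alpha> * (a1 - b) else 0) + (if Q then \<beta> * (a2 - b) else 0))" for w a1 a2 b :: real and P Q
        by (simp add: distrib_left)
      show ?thesis unfolding e1 e2 r1 r2 unfolding G_def Hf_def mvi by (rule ia)
    qed
    have "B k + B (Suc k) = (\<Sum>i\<le>size V. wt c (size V) i *
          ((if U + mset (take i (sl V)) \<noteq> {#} then \<alpha> * (G (U + mset (take i (sl V)) - {#Max_mset (U + mset (take i (sl V)))#})
                   (add_mset (Max_mset (U + mset (take i (sl V)))) (mset (drop i (sl V))))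
                 - G (U + mset (take i (sl V))) (mset (drop i (sl V)))) else 0)
         + (if mset (drop i (sl V)) \<noteq> {#} then \<beta> * (Hf (U + mset (take i (sl V)))
                   (mset (drop i (sl V)) - {#Max_mset (mset (drop i (sl V)))#}) (Max_mset (mset (drop i (sl V))))
                 - G (U + mset (take i (sl V))) (mset (drop i (sl V)))) else 0)))"
      unfolding B_def V_def[symmetric] sum.distrib[symmetric] Bterm ..
    also have "\<dots> = A k + A (Suc k)"
      unfolding Ak ASk by (rule local_id[OF ab, symmetric])
    finally show "A k + A (Suc k) = B k + B (Suc k)" by simp
  qed
  then show ?thesis using lhs rhs unfolding x'_def c_def by simp
qed

lemma Qop_cong:
  assumes a: "a \<in> Conf n lam" and n: "n \<ge> 2" and g: "\<And>b. b \<in> Conf n lam \<Longrightarrow> g b = g' b"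
  shows "Qop n x g a = Qop n x g' a"
  unfolding Qop_def
proof (intro sum.cong refl)
  fix j assume j: "j \<in> {1..n}"
  show "rr x a j * (g (step n a j) - g a) = rr x a j * (g' (step n a j) - g' a)"
  proof (cases "a j = {#}")
    case False
    then show ?thesis using g[OF step_Conf[OF a j False n]] g[OF a] by simp
  qed (simp add: rr_def)
qed

lemma swap_intertw:
  assumes n: "n \<ge> 3" and k: "1 \<le> k" "Suc k \<le> n" and xk: "x k > 0" and xSk: "x (Suc k) > 0"
  shows "intertw (Conf n lam) (gen n lam x) (gen n lam (x(k := x (Suc k), Suc k := x k))) (Kmat k (x (Suc k) / x k))"
proof
  show "finite (Conf n lam)" by (rule finite_Conf)
next
  fix f a assume a: "a \<in> Conf n lam"
  let ?S = "Conf n lam" and ?x' = "x(k := x (Suc k), Suc k := x k)" and ?c = "x (Suc k) / x k"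
  have n2: "n \<ge> 2" using n by simp
  have "opm ?S (gen n lam ?x') (opm ?S (Kmat k ?c) f) a = Qop n ?x' (opm ?S (Kmat k ?c) f) a"
    by (rule gen_opm[OF a n2])
  also have "\<dots> = Qop n ?x' (Kop k ?c f) a"
    by (rule Qop_cong[OF a n2]) (rule Kmat_opm[OF _ k])
  also have "\<dots> = Kop k ?c (Qop n x f) a"
    by (rule Qop_Kop[OF n k xk xSk])
  also have "\<dots> = Kop k ?c (opm ?S (gen n lam x) f) a"
    unfolding Kop_def by (intro sum.cong refl) (simp add: gen_opm[OF mv_Conf[OF a k] n2])
  also have "\<dots> = opm ?S (Kmat k ?c) (opm ?S (gen n lam x) f) a"
    by (rule Kmat_opm[OF a k, symmetric])
  finally show "opm ?S (gen n lam ?x') (opm ?S (Kmat k ?c) f) a = opm ?S (Kmat k ?c) (opm ?S (gen n lam x) f) a" .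
qed

lemma swap_fdd:
  assumes n: "n \<ge> 3" and k: "l < k" "Suc k \<le> n" and xk: "x k > 0" and xSk: "x (Suc k) > 0"
    and a: "a \<in> Conf n lam" and e: "a (Suc k) = {#}"
  shows "fdd (Conf n lam) (gen n lam (x(k := x (Suc k), Suc k := x k))) l a s obs = fdd (Conf n lam) (gen n lam x) l a s obs"
proof -
  have k1: "1 \<le> k" using k by simp
  let ?c = "x (Suc k) / x k"
  have "fdd (Conf n lam) (gen n lam (x(k := x (Suc k), Suc k := x k))) l a s obs
      = opm (Conf n lam) (Kmat k ?c) (\<lambda>d. fdd (Conf n lam) (gen n lam x) l d s obs) a"
  proof (rule fdd_comm[OF swap_intertw[OF n k1 k(2) xk xSk]])
    show "\<And>a d. a \<in> Conf n lam \<Longrightarrow> d \<in> Conf n lam \<Longrightarrow> Kmat k ?c a d \<noteq> 0 \<Longrightarrow> restr l d = restr l a"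
      using Kmat_restr k(1) by blast
    show "\<And>a. a \<in> Conf n lam \<Longrightarrow> (\<Sum>d\<in>Conf n lam. Kmat k ?c a d) = 1"
      using Kmat_sum k1 k(2) by blast
  qed (rule a)
  also have "\<dots> = fdd (Conf n lam) (gen n lam x) l a s obs"
  proof -
    have "opm (Conf n lam) (Kmat k ?c) (\<lambda>d. fdd (Conf n lam) (gen n lam x) l d s obs) a
        = (\<Sum>d\<in>Conf n lam. if d = a then fdd (Conf n lam) (gen n lam x) l d s obs else 0)"
      unfolding opm_def Kmat_empty[of a k, OF e] by (intro sum.cong) auto
    also have "\<dots> = fdd (Conf n lam) (gen n lam x) l a s obs"
      using a finite_Conf by (simp add: sum.delta')
    finally show ?thesis .
  qed
  finally show ?thesis .
qed

lemma transpose_adj: "x \<circ> transpose k (Suc k) = x(k := x (Suc k), Suc k := x k)"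
  by (auto simp: fun_eq_iff transpose_def)

lemma pos_transpose:
  assumes "\<forall>j\<in>{1..n}. y j > (0::real)" "a \<in> {1..n}" "b \<in> {1..n}"
  shows "\<forall>j\<in>{1..n}. (y \<circ> transpose a b) j > 0"
  using assms by (auto simp: transpose_def)

lemma transp_fdd:
  assumes n: "n \<ge> 3" and a: "eta0 \<in> Conf n lam" and e: "\<forall>j\<in>{l+1..n}. eta0 j = {#}"
  shows "l + 1 \<le> a \<Longrightarrow> a < b \<Longrightarrow> b \<le> n \<Longrightarrow> \<forall>j\<in>{1..n}. y j > (0::real) \<Longrightarrow>
     fdd (Conf n lam) (gen n lam y) l eta0 s obs = fdd (Conf n lam) (gen n lam (y \<circ> transpose a b)) l eta0 s obs"
proof (induction "b - a" arbitrary: b y)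
  case 0
  then show ?case by simp
next
  case (Suc d)
  show ?case
  proof (cases "b = Suc a")
    case True
    have "fdd (Conf n lam) (gen n lam (y(a := y (Suc a), Suc a := y a))) l eta0 s obs = fdd (Conf n lam) (gen n lam y) l eta0 s obs"
      by (rule swap_fdd[OF n _ _ _ _ a]) (use Suc.prems True e in auto)
    then show ?thesis unfolding True transpose_adj by simp
  next
    case False
    let ?s = "transpose (b - 1) b" and ?t = "transpose a (b - 1)"
    have ab: "a < b - 1" using False Suc.prems by auto
    have bn: "b - 1 \<in> {1..n}" "b \<in> {1..n}" "a \<in> {1..n}" using Suc.prems ab by auto
    have y1: "\<forall>j\<in>{1..n}. (y \<circ> ?s) j > 0" using pos_transpose[OF Suc.prems(4) bn(1,2)] .
    have y2: "\<forall>j\<in>{1..n}. (y \<circ> ?s \<circ> ?t) j > 0" using pos_transpose[OF y1 bn(3,1)] by (simp add: comp_assoc)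
    have s1: "fdd (Conf n lam) (gen n lam ((y \<circ> ?s)(b - 1 := (y \<circ> ?s) (Suc (b - 1)), Suc (b - 1) := (y \<circ> ?s) (b - 1)))) l eta0 s obs
        = fdd (Conf n lam) (gen n lam (y \<circ> ?s)) l eta0 s obs"
      by (rule swap_fdd[OF n _ _ _ _ a]) (use Suc.prems ab e y1 in auto)
    have "(y \<circ> ?s)(b - 1 := (y \<circ> ?s) (Suc (b - 1)), Suc (b - 1) := (y \<circ> ?s) (b - 1)) = y"
      using ab by (auto simp: fun_eq_iff transpose_def)
    then have E1: "fdd (Conf n lam) (gen n lam y) l eta0 s obs = fdd (Conf n lam) (gen n lam (y \<circ> ?s)) l eta0 s obs"
      using s1 by simp
    have E2: "fdd (Conf n lam) (gen n lam (y \<circ> ?s)) l eta0 s obs = fdd (Conf n lam) (gen n lam (y \<circ> ?s \<circ> ?t)) l eta0 s obs"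
      using Suc.hyps(1)[of "b - 1" "y \<circ> ?s"] Suc.hyps(2) Suc.prems ab y1 by auto
    have s3: "fdd (Conf n lam) (gen n lam ((y \<circ> ?s \<circ> ?t)(b - 1 := (y \<circ> ?s \<circ> ?t) (Suc (b - 1)), Suc (b - 1) := (y \<circ> ?s \<circ> ?t) (b - 1)))) l eta0 s obs
        = fdd (Conf n lam) (gen n lam (y \<circ> ?s \<circ> ?t)) l eta0 s obs"
      by (rule swap_fdd[OF n _ _ _ _ a]) (use Suc.prems ab e y2 in auto)
    have "(y \<circ> ?s \<circ> ?t)(b - 1 := (y \<circ> ?s \<circ> ?t) (Suc (b - 1)), Suc (b - 1) := (y \<circ> ?s \<circ> ?t) (b - 1)) = y \<circ> transpose a b"
      using ab by (auto simp: fun_eq_iff transpose_def)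
    then have E3: "fdd (Conf n lam) (gen n lam (y \<circ> ?s \<circ> ?t)) l eta0 s obs = fdd (Conf n lam) (gen n lam (y \<circ> transpose a b)) l eta0 s obs"
      using s3 by simp
    show ?thesis using E1 E2 E3 by simp
  qed
qed

theorem theorem7:
  fixes n l :: nat and lam :: "nat multiset" and x :: "nat \<Rightarrow> real"
    and \<sigma> :: "nat \<Rightarrow> nat" and eta0 :: "nat \<Rightarrow> nat multiset"
    and obs :: "(real \<times> nat multiset list) list"
  assumes "n \<ge> 3" and "1 < l" and "l < n"
    and "\<forall>p\<in>#lam. p > 0"
    and "\<forall>j\<in>{1..n}. x j > 0"
    and "\<sigma> permutes {l+1..n}"
    and "eta0 \<in> Conf n lam"
    and "\<forall>j\<in>{l+1..n}. eta0 j = {#}"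
    and "sorted_wrt (<) (map fst obs)"
    and "\<forall>p\<in>set obs. fst p > 0"
  shows "fdd (Conf n lam) (gen n lam x) l eta0 0 obs
       = fdd (Conf n lam) (gen n lam (x \<circ> \<sigma>)) l eta0 0 obs"
proof -
  define P where "P p \<longleftrightarrow> (\<forall>y. (\<forall>j\<in>{1..n}. y j > (0::real)) \<longrightarrow>
      fdd (Conf n lam) (gen n lam y) l eta0 0 obs = fdd (Conf n lam) (gen n lam (y \<circ> p)) l eta0 0 obs)" for p
  have T: "fdd (Conf n lam) (gen n lam y) l eta0 0 obs = fdd (Conf n lam) (gen n lam (y \<circ> transpose a b)) l eta0 0 obs"
    if "a \<in> {l+1..n}" "b \<in> {l+1..n}" "a \<noteq> b" "\<forall>j\<in>{1..n}. y j > (0::real)" for a b y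
  proof (cases "a < b")
    case True
    show ?thesis by (rule transp_fdd[OF assms(1,7,8)]) (use that True in auto)
  next
    case False
    then have "b < a" using that by auto
    then show ?thesis using transp_fdd[OF assms(1,7,8), of b a y] that by (simp add: transpose_commute)
  qed
  have "P \<sigma>" using assms(6) finite_atLeastAtMost
  proof (induction rule: permutes_induct)
    case id
    then show ?case by (simp add: P_def id_def[symmetric])
  next
    case (swap a b p)
    show ?case unfolding P_def
    proof (intro allI impI)
      fix y :: "nat \<Rightarrow> real" assume y: "\<forall>j\<in>{1..n}. y j > 0"
      have ab: "a \<in> {1..n}" "b \<in> {1..n}" using swap.hyps(1,2) assms(2) by auto
      have y': "\<forall>j\<in>{1..n}. (y \<circ> transpose a b) j > 0" by (rule pos_transpose[OF y ab])
      have "fdd (Conf n lam) (gen n lam y) l eta0 0 obs = fdd (Conf n lam) (gen n lam (y \<circ> transpose a b)) l eta0 0 obs"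
        by (rule T[OF swap.hyps(1,2,3) y])
      also have "\<dots> = fdd (Conf n lam) (gen n lam (y \<circ> transpose a b \<circ> p)) l eta0 0 obs"
        using swap.IH y' unfolding P_def by blast
      finally show "fdd (Conf n lam) (gen n lam y) l eta0 0 obs = fdd (Conf n lam) (gen n lam (y \<circ> (transpose a b \<circ> p))) l eta0 0 obs"
        by (simp add: comp_assoc)
    qed
  qed
  then show ?thesis using assms(5) unfolding P_def by blast
qed

end
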